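(* Let $\sigma$ be a ruled submanifold of degree $d$. Then at every regular point $p$ of $\sigma$ the first normal space satisfies $d-1 \le \dim N^{1}_{p}\sigma \le d+1$.
   Context: Ruled submanifold: given an open interval $I$, a smooth unit-speed curve $\gamma \colon I \to \mathbb{R}^{m+n}$ and smooth vector fields $X_{1},\dotsc,X_{m-1}$ along $\gamma$ that are orthonormal at each $t$, define $\sigma(t,u^{1},\dotsc,u^{m-1})=\gamma(t)+\sum_{j=1}^{m-1}u^{j}X_{j}(t)$ on $I\times\mathbb{R}^{m-1}$. A point is regular if $d\sigma$ is injective there. Degree: for a subbundle $\mathcal{E}$ of $T\mathbb{R}^{m+n}|_{\gamma}$, define $\rho_{t}\colon\mathcal{E}_{t}\to\mathcal{E}_{t}^{\perp}$ by $v\mapsto\pi^{\perp}(dV/dt(t))$. Here $V$ is any smooth local section of $\mathcal{E}$ with $V(t)=v$, and $\pi^{\perp}$ is orthogonal projection onto $\mathcal{E}_{t}^{\perp}$. The degree of $\mathcal{E}$ at $t$ is $\operatorname{rank}\rho_{t}$. The submanifold $\sigma$ is of degree $d$ if the ruling distribution $\mathcal{D}_{t}=\operatorname{Span}(X_{j}(t))_{j=1}^{m-1}$ has degree $d$ at every $t$. The first normal space $N^{1}_{p}\sigma$ at a regular point $p$ is the linear span of the image of the second fundamental form of $\sigma$ at $p$ (a subspace of the normal space). *)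

theory Defs
  imports "HOL-Analysis.Analysis"
begin

fun vderiv :: "nat \<Rightarrow> (real \<Rightarrow> 'a::real_normed_vector) \<Rightarrow> real \<Rightarrow> 'a" where
  "vderiv 0 f = f"
| "vderiv (Suc k) f = (\<lambda>t. vector_derivative (vderiv k f) (at t))"

definition smooth_curve_on :: "real set \<Rightarrow> (real \<Rightarrow> 'a::real_normed_vector) \<Rightarrow> bool" where
  "smooth_curve_on I f \<longleftrightarrow> (\<forall>k. \<forall>t\<in>I. vderiv k f differentiable (at t))"

definition orth_proj :: "'a::euclidean_space set \<Rightarrow> 'a \<Rightarrow> 'a" where
  "orth_proj S w = (THE p. p \<in> S \<and> w - p \<in> orthogonal_comp S)"

definition local_section :: "(real \<Rightarrow> 'a::euclidean_space set) \<Rightarrow> real \<Rightarrow> (real \<Rightarrow> 'a) \<Rightarrow> bool" where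
  "local_section E t V \<longleftrightarrow>
     (\<exists>e>0. smooth_curve_on (ball t e) V \<and> (\<forall>s\<in>ball t e. V s \<in> E s))"

definition rho_map :: "(real \<Rightarrow> 'a::euclidean_space set) \<Rightarrow> real \<Rightarrow> 'a \<Rightarrow> 'a" where
  "rho_map E t v = (THE w. \<forall>V. local_section E t V \<and> V t = v \<longrightarrow>
        orth_proj (orthogonal_comp (E t)) (vector_derivative V (at t)) = w)"

definition degree_at :: "(real \<Rightarrow> 'a::euclidean_space set) \<Rightarrow> real \<Rightarrow> nat" where
  "degree_at E t = dim (rho_map E t ` E t)"

definition ruling_distr :: "('k \<Rightarrow> real \<Rightarrow> 'a::euclidean_space) \<Rightarrow> real \<Rightarrow> 'a set" where
  "ruling_distr X t = span (range (\<lambda>j. X j t))"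

definition ruled_map :: "(real \<Rightarrow> 'a::euclidean_space) \<Rightarrow> ('k::finite \<Rightarrow> real \<Rightarrow> 'a)
    \<Rightarrow> real \<times> (real ^ 'k) \<Rightarrow> 'a" where
  "ruled_map \<gamma> X p = \<gamma> (fst p) + (\<Sum>j\<in>UNIV. (snd p $ j) *\<^sub>R X j (fst p))"

definition second_deriv :: "('b::real_normed_vector \<Rightarrow> 'a::real_normed_vector) \<Rightarrow> 'b \<Rightarrow> 'b \<Rightarrow> 'b \<Rightarrow> 'a" where
  "second_deriv f x h k = frechet_derivative (\<lambda>y. frechet_derivative f (at y) h) (at x) k"

definition regular_point :: "('b::real_normed_vector \<Rightarrow> 'a::real_normed_vector) \<Rightarrow> 'b \<Rightarrow> bool" where
  "regular_point f x \<longleftrightarrow> f differentiable (at x) \<and> inj (frechet_derivative f (at x))"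

definition normal_space :: "('b::real_normed_vector \<Rightarrow> 'a::euclidean_space) \<Rightarrow> 'b \<Rightarrow> 'a set" where
  "normal_space f x = orthogonal_comp (range (frechet_derivative f (at x)))"

definition second_fund_form :: "('b::real_normed_vector \<Rightarrow> 'a::euclidean_space) \<Rightarrow> 'b \<Rightarrow> 'b \<Rightarrow> 'b \<Rightarrow> 'a" where
  "second_fund_form f x h k = orth_proj (normal_space f x) (second_deriv f x h k)"

definition first_normal_space :: "('b::real_normed_vector \<Rightarrow> 'a::euclidean_space) \<Rightarrow> 'b \<Rightarrow> 'a set" where
  "first_normal_space f x = span {second_fund_form f x h k | h k. True}"

end

theory Submission
  imports Defs
begin

lemma orth_proj_props:
  fixes U :: "'a::euclidean_space set"
  assumes "subspace U"
  shows "orth_proj U w \<in> U \<and> w - orth_proj U w \<in> orthogonal_comp U"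
proof -
  obtain y z where y: "y \<in> span U" and z: "\<And>v. v \<in> span U \<Longrightarrow> orthogonal z v" and wz: "w = y + z"
    using orthogonal_subspace_decomp_exists by blast
  have yU: "y \<in> U" using y assms span_eq_iff by blast
  have zc: "w - y \<in> orthogonal_comp U"
    using z wz span_base unfolding orthogonal_comp_def by (auto simp: orthogonal_commute)
  have uniq: "p = y" if "p \<in> U \<and> w - p \<in> orthogonal_comp U" for p
  proof -
    have "p - y \<in> U" using that yU assms subspace_diff by blast
    moreover have "p - y \<in> orthogonal_comp U"
    proof -
      have "(w - y) - (w - p) \<in> orthogonal_comp U"
        using subspace_diff[OF subspace_orthogonal_comp zc] that by blast
      then show ?thesis by simp
    qed
    ultimately have "p - y \<in> U \<inter> orthogonal_comp U" by blast
    then show ?thesis using orthogonal_Int_0[OF assms] by simp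
  qed
  have "orth_proj U w = y"
    unfolding orth_proj_def
    using yU zc uniq by (intro the_equality) blast+
  then show ?thesis using yU zc by simp
qed

lemma orth_proj_unique:
  fixes U :: "'a::euclidean_space set"
  assumes "subspace U" "p \<in> U" "w - p \<in> orthogonal_comp U"
  shows "orth_proj U w = p"
proof -
  have a: "orth_proj U w \<in> U" "w - orth_proj U w \<in> orthogonal_comp U"
    using orth_proj_props[OF assms(1)] by auto
  have "orth_proj U w - p \<in> U" using a assms by (simp add: subspace_diff)
  moreover have "(w - p) - (w - orth_proj U w) \<in> orthogonal_comp U"
    using a assms subspace_orthogonal_comp by (blast intro: subspace_diff)
  moreover have "(w - p) - (w - orth_proj U w) = orth_proj U w - p" by simp
  ultimately have "orth_proj U w - p \<in> U \<inter> orthogonal_comp U" by simp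
  then show ?thesis using orthogonal_Int_0[OF assms(1)] by simp
qed

lemma orth_proj_linear:
  fixes U :: "'a::euclidean_space set"
  assumes "subspace U"
  shows "linear (orth_proj U)"
proof (rule linearI)
  fix x y
  have px: "orth_proj U x \<in> U" "x - orth_proj U x \<in> orthogonal_comp U"
   and py: "orth_proj U y \<in> U" "y - orth_proj U y \<in> orthogonal_comp U"
    using orth_proj_props[OF assms] by auto
  have a: "orth_proj U x + orth_proj U y \<in> U" using px py assms by (simp add: subspace_add)
  have "(x - orth_proj U x) + (y - orth_proj U y) \<in> orthogonal_comp U"
    using subspace_add[OF subspace_orthogonal_comp px(2) py(2)] .
  then have b: "(x + y) - (orth_proj U x + orth_proj U y) \<in> orthogonal_comp U"
    by (simp add: algebra_simps)
  show "orth_proj U (x + y) = orth_proj U x + orth_proj U y"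
    by (rule orth_proj_unique[OF assms a b])
next
  fix c x
  have px: "orth_proj U x \<in> U" "x - orth_proj U x \<in> orthogonal_comp U"
    using orth_proj_props[OF assms] by auto
  have a: "c *\<^sub>R orth_proj U x \<in> U" using px assms by (simp add: subspace_scale)
  have "c *\<^sub>R (x - orth_proj U x) \<in> orthogonal_comp U"
    using subspace_scale[OF subspace_orthogonal_comp px(2)] .
  then have b: "c *\<^sub>R x - c *\<^sub>R orth_proj U x \<in> orthogonal_comp U"
    by (simp add: algebra_simps)
  show "orth_proj U (c *\<^sub>R x) = c *\<^sub>R orth_proj U x"
    by (rule orth_proj_unique[OF assms a b])
qed

lemma orth_proj_in:
  fixes U :: "'a::euclidean_space set"
  assumes "subspace U" "w \<in> U" shows "orth_proj U w = w"
proof (rule orth_proj_unique[OF assms])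
  show "w - w \<in> orthogonal_comp U" using subspace_0[OF subspace_orthogonal_comp] by simp
qed

lemma orth_proj_perp:
  fixes U :: "'a::euclidean_space set"
  assumes "subspace U" "w \<in> orthogonal_comp U" shows "orth_proj U w = 0"
  using orth_proj_unique[OF assms(1) subspace_0[OF assms(1)]] assms(2) by simp


lemma dim_insert_le: "dim (insert (x::'a::euclidean_space) S) \<le> dim S + 1"
  using dim_insert[of x S] by (simp split: if_splits)

lemma dim_bounds_core:
  fixes D Tg SS N1 :: "'a::euclidean_space set" and A B :: 'a
  assumes sD: "subspace D" and sTg: "subspace Tg" and DT: "D \<subseteq> Tg"
    and TA: "Tg \<subseteq> span (insert A D)"
    and sSS: "subspace SS" and sN1: "subspace N1"
    and N1a: "orth_proj (orthogonal_comp Tg) ` SS \<subseteq> N1"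
    and N1b: "N1 \<subseteq> span (insert (orth_proj (orthogonal_comp Tg) B) (orth_proj (orthogonal_comp Tg) ` SS))"
  shows "int (dim (orth_proj (orthogonal_comp D) ` SS)) - 1 \<le> int (dim N1) \<and>
         dim N1 \<le> dim (orth_proj (orthogonal_comp D) ` SS) + 1"
proof -
  define N where "N = orthogonal_comp Tg"
  define P where "P = orth_proj N"
  define Q where "Q = orth_proj (orthogonal_comp D)"
  have sN: "subspace N" unfolding N_def by (rule subspace_orthogonal_comp)
  have sDp: "subspace (orthogonal_comp D)" by (rule subspace_orthogonal_comp)
  have NN: "orthogonal_comp N = Tg" unfolding N_def using orthogonal_comp_self[OF sTg] .
  have DD: "orthogonal_comp (orthogonal_comp D) = D" using orthogonal_comp_self[OF sD] .
  have ND: "N \<subseteq> orthogonal_comp D" unfolding N_def using orthogonal_comp_anti_mono[OF DT] .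
  have linP: "linear P" unfolding P_def using orth_proj_linear[OF sN] .
  have linQ: "linear Q" unfolding Q_def using orth_proj_linear[OF sDp] .
  have Qp: "Q s \<in> orthogonal_comp D" "s - Q s \<in> D" for s
    using orth_proj_props[OF sDp, of s] DD unfolding Q_def by auto
  have Pp: "P s \<in> N" "s - P s \<in> Tg" for s
    using orth_proj_props[OF sN, of s] NN unfolding P_def by auto
  have PQ: "P s = P (Q s)" for s
  proof -
    have "s - Q s \<in> orthogonal_comp N" using Qp(2)[of s] DT NN by blast
    then have "P (s - Q s) = 0" unfolding P_def by (rule orth_proj_perp[OF sN])
    then show ?thesis using linear_diff[OF linP] by simp
  qed
  have imgPQ: "P ` SS = P ` (Q ` SS)" using PQ by (auto simp: image_iff)
  have up1: "dim (P ` SS) \<le> dim (Q ` SS)"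
    unfolding imgPQ by (rule dim_image_le[OF linP])
  have up2: "dim N1 \<le> dim (P ` SS) + 1"
  proof -
    have "dim N1 \<le> dim (span (insert (P B) (P ` SS)))"
      using N1b unfolding P_def N_def by (rule dim_subset)
    also have "\<dots> \<le> dim (P ` SS) + 1" using dim_insert_le by simp
    finally show ?thesis .
  qed
  define a where "a = Q A"
  have QS: "Q ` SS \<subseteq> span (insert a (P ` SS))"
  proof
    fix x assume "x \<in> Q ` SS"
    then obtain s where s: "s \<in> SS" "x = Q s" by blast
    define r where "r = Q s - P s"
    have r1: "r = (s - P s) - (s - Q s)" unfolding r_def by simp
    have rT: "r \<in> Tg" unfolding r1
      using subspace_diff[OF sTg Pp(2)[of s]] Qp(2)[of s] DT by blast
    have rD: "r \<in> orthogonal_comp D" unfolding r_def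
      using subspace_diff[OF sDp Qp(1)[of s]] Pp(1)[of s] ND by blast
    from rT TA have "r \<in> span (insert A D)" by blast
    then obtain c where c: "r - c *\<^sub>R A \<in> span D" using span_breakdown_eq by blast
    have c': "r - c *\<^sub>R A \<in> D" using c sD span_eq_iff by blast
    have "c *\<^sub>R (A - a) \<in> D" unfolding a_def using subspace_scale[OF sD Qp(2)[of A]] .
    then have "(r - c *\<^sub>R A) + c *\<^sub>R (A - a) \<in> D" using subspace_add[OF sD c'] by blast
    moreover have "(r - c *\<^sub>R A) + c *\<^sub>R (A - a) = r - c *\<^sub>R a" by (simp add: algebra_simps)
    ultimately have e1: "r - c *\<^sub>R a \<in> D" by simp
    have "c *\<^sub>R a \<in> orthogonal_comp D" unfolding a_def using subspace_scale[OF sDp Qp(1)[of A]] .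
    then have e2: "r - c *\<^sub>R a \<in> orthogonal_comp D" using subspace_diff[OF sDp rD] by blast
    have "r - c *\<^sub>R a \<in> D \<inter> orthogonal_comp D" using e1 e2 by blast
    then have "r = c *\<^sub>R a" using orthogonal_Int_0[OF sD] by simp
    then have "x = P s + c *\<^sub>R a" using s r_def by (simp add: algebra_simps)
    moreover have "P s \<in> span (insert a (P ` SS))" using s(1) by (intro span_base) blast
    moreover have "c *\<^sub>R a \<in> span (insert a (P ` SS))" by (intro span_mul span_base) blast
    ultimately show "x \<in> span (insert a (P ` SS))" by (simp add: span_add)
  qed
  have lo: "dim (Q ` SS) \<le> dim N1 + 1"
  proof -
    have "dim (Q ` SS) \<le> dim (span (insert a (P ` SS)))" using QS by (rule dim_subset)
    also have "\<dots> \<le> dim (P ` SS) + 1" using dim_insert_le by simp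
    also have "\<dots> \<le> dim N1 + 1" using dim_subset[OF N1a] unfolding P_def N_def by simp
    finally show ?thesis .
  qed
  show ?thesis using up1 up2 lo unfolding Q_def P_def N_def by linarith
qed


lemma smooth_vd:
  assumes "smooth_curve_on S f" "s \<in> S"
  shows "(vderiv k f has_vector_derivative vderiv (Suc k) f s) (at s)"
  using assms unfolding smooth_curve_on_def by (simp add: vector_derivative_works[symmetric])

lemma comp_fst_deriv:
  fixes f :: "real \<Rightarrow> 'a::real_normed_vector" and y :: "real \<times> 'b::real_normed_vector"
  assumes "(f has_vector_derivative f0) (at (fst y))"
  shows "((\<lambda>p. f (fst p)) has_derivative (\<lambda>h. fst h *\<^sub>R f0)) (at y)"
proof -
  have "(fst has_derivative fst) (at y)" by (rule bounded_linear_imp_has_derivative) (rule bounded_linear_fst)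
  moreover have "(f has_derivative (\<lambda>x. x *\<^sub>R f0)) (at (fst y))"
    using assms unfolding has_vector_derivative_def .
  ultimately show ?thesis by (rule has_derivative_compose)
qed

lemma nth_snd_deriv:
  "((\<lambda>p::real \<times> (real ^ 'k). snd p $ j) has_derivative (\<lambda>h. snd h $ j)) F"
proof -
  have "bounded_linear (\<lambda>p::real \<times> (real ^ 'k). snd p $ j)"
    by (rule bounded_linear_compose[OF bounded_linear_vec_nth bounded_linear_snd])
  then show ?thesis by (rule bounded_linear_imp_has_derivative)
qed

lemma sigma_has_deriv:
  fixes \<gamma> :: "real \<Rightarrow> 'a::euclidean_space" and X :: "'k::finite \<Rightarrow> real \<Rightarrow> 'a"
  assumes "(\<gamma> has_vector_derivative g0) (at (fst y))"
    and "\<And>j. (X j has_vector_derivative Xd0 j) (at (fst y))"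
  shows "(ruled_map \<gamma> X has_derivative (\<lambda>h. fst h *\<^sub>R g0 +
     (\<Sum>j\<in>UNIV. (snd y $ j) *\<^sub>R (fst h *\<^sub>R Xd0 j) + (snd h $ j) *\<^sub>R X j (fst y)))) (at y)"
proof -
  have "((\<lambda>p. \<gamma> (fst p) + (\<Sum>j\<in>UNIV. (snd p $ j) *\<^sub>R X j (fst p))) has_derivative (\<lambda>h. fst h *\<^sub>R g0 +
     (\<Sum>j\<in>UNIV. (snd y $ j) *\<^sub>R (fst h *\<^sub>R Xd0 j) + (snd h $ j) *\<^sub>R X j (fst y)))) (at y)"
    by (intro has_derivative_add comp_fst_deriv[OF assms(1)] has_derivative_sum
        has_derivative_scaleR[OF nth_snd_deriv comp_fst_deriv[OF assms(2)]])
  then show ?thesis unfolding ruled_map_def[abs_def] .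
qed

lemma F_has_deriv:
  fixes g :: "real \<Rightarrow> 'a::euclidean_space" and X Xd :: "'k::finite \<Rightarrow> real \<Rightarrow> 'a"
  assumes "(g has_vector_derivative g1) (at (fst y))"
    and "\<And>j. (Xd j has_vector_derivative Xdd1 j) (at (fst y))"
    and "\<And>j. (X j has_vector_derivative Xd1 j) (at (fst y))"
  shows "((\<lambda>y. fst h *\<^sub>R g (fst y) + (\<Sum>j\<in>UNIV. (snd y $ j) *\<^sub>R (fst h *\<^sub>R Xd j (fst y)) + (snd h $ j) *\<^sub>R X j (fst y)))
     has_derivative (\<lambda>k. fst h *\<^sub>R (fst k *\<^sub>R g1) + (\<Sum>j\<in>UNIV. ((snd y $ j) *\<^sub>R (fst h *\<^sub>R (fst k *\<^sub>R Xdd1 j)) + (snd k $ j) *\<^sub>R (fst h *\<^sub>R Xd j (fst y))) + (snd h $ j) *\<^sub>R (fst k *\<^sub>R Xd1 j)))) (at y)"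
  by (intro has_derivative_add has_derivative_scaleR_right comp_fst_deriv[OF assms(1)] has_derivative_sum
        has_derivative_scaleR[OF nth_snd_deriv has_derivative_scaleR_right[OF comp_fst_deriv[OF assms(2)]]]
        comp_fst_deriv[OF assms(3)])


lemma ortho_expand:
  fixes X :: "'k::finite \<Rightarrow> real \<Rightarrow> 'a::euclidean_space"
  assumes orth: "\<forall>i j. X i s \<bullet> X j s = (if i = j then 1 else 0)"
    and w: "w \<in> span (range (\<lambda>j. X j s))"
  shows "w = (\<Sum>j\<in>UNIV. (w \<bullet> X j s) *\<^sub>R X j s)"
  using w
proof (induction rule: span_induct)
  case base
  show ?case
    unfolding subspace_def
    by (simp add: inner_add_left scaleR_add_left sum.distrib scaleR_sum_right[symmetric] flip: scaleR_scaleR)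
next
  case (step x)
  then obtain i where x: "x = X i s" by blast
  have "(\<Sum>j\<in>UNIV. (X i s \<bullet> X j s) *\<^sub>R X j s) = (\<Sum>j\<in>UNIV. (if i = j then X j s else 0))"
    using orth by (intro sum.cong) auto
  also have "\<dots> = X i s" by simp
  finally show ?case using x by simp
qed

lemma smooth_subset: "smooth_curve_on S f \<Longrightarrow> T \<subseteq> S \<Longrightarrow> smooth_curve_on T f"
  unfolding smooth_curve_on_def by blast

lemma smooth_lin_comb:
  fixes X :: "'k::finite \<Rightarrow> real \<Rightarrow> 'a::euclidean_space"
  assumes S: "open S" and sm: "\<And>j. smooth_curve_on S (X j)"
  shows "smooth_curve_on S (\<lambda>s. \<Sum>j\<in>UNIV. c j *\<^sub>R X j s)"
proof -
  have hv: "((\<lambda>s. \<Sum>j\<in>UNIV. c j *\<^sub>R vderiv k (X j) s) has_vector_derivative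
      (\<Sum>j\<in>UNIV. c j *\<^sub>R vderiv (Suc k) (X j) s)) (at s)" if "s \<in> S" for k s
    by (intro has_vector_derivative_sum bounded_linear.has_vector_derivative[OF bounded_linear_scaleR_right]
        smooth_vd[OF sm that])
  have eq: "\<forall>s\<in>S. vderiv k (\<lambda>s. \<Sum>j\<in>UNIV. c j *\<^sub>R X j s) s = (\<Sum>j\<in>UNIV. c j *\<^sub>R vderiv k (X j) s)" for k
  proof (induction k)
    case 0
    then show ?case by simp
  next
    case (Suc k)
    show ?case
    proof
      fix s assume s: "s \<in> S"
      have "(vderiv k (\<lambda>s. \<Sum>j\<in>UNIV. c j *\<^sub>R X j s) has_vector_derivative
          (\<Sum>j\<in>UNIV. c j *\<^sub>R vderiv (Suc k) (X j) s)) (at s)"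
        by (rule has_vector_derivative_transform_within_open[OF hv[OF s] S s]) (use Suc in simp)
      then show "vderiv (Suc k) (\<lambda>s. \<Sum>j\<in>UNIV. c j *\<^sub>R X j s) s = (\<Sum>j\<in>UNIV. c j *\<^sub>R vderiv (Suc k) (X j) s)"
        by (simp add: vector_derivative_at)
    qed
  qed
  show ?thesis
    unfolding smooth_curve_on_def
  proof (intro allI ballI)
    fix k s assume s: "s \<in> S"
    have "(vderiv k (\<lambda>s. \<Sum>j\<in>UNIV. c j *\<^sub>R X j s) has_vector_derivative
          (\<Sum>j\<in>UNIV. c j *\<^sub>R vderiv (Suc k) (X j) s)) (at s)"
      by (rule has_vector_derivative_transform_within_open[OF hv[OF s] S s]) (use eq in simp)
    then show "vderiv k (\<lambda>s. \<Sum>j\<in>UNIV. c j *\<^sub>R X j s) differentiable at s"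
      by (rule differentiableI_vector)
  qed
qed


lemma rho_value:
  fixes X :: "'k::finite \<Rightarrow> real \<Rightarrow> 'a::euclidean_space"
  assumes I: "open I" and t: "t \<in> I"
    and X_smooth: "\<forall>j. smooth_curve_on I (X j)"
    and orth: "\<forall>t\<in>I. \<forall>i j. X i t \<bullet> X j t = (if i = j then 1 else 0)"
    and v: "v \<in> ruling_distr X t"
  shows "rho_map (ruling_distr X) t v =
    orth_proj (orthogonal_comp (ruling_distr X t)) (\<Sum>j\<in>UNIV. (v \<bullet> X j t) *\<^sub>R vderiv 1 (X j) t)"
proof -
  define E where "E = ruling_distr X"
  define D where "D = E t"
  define Q where "Q = orth_proj (orthogonal_comp D)"
  define Mv where "Mv = (\<Sum>j\<in>UNIV. (v \<bullet> X j t) *\<^sub>R vderiv 1 (X j) t)"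
  have sDp: "subspace (orthogonal_comp D)" by (rule subspace_orthogonal_comp)
  have linQ: "linear Q" unfolding Q_def by (rule orth_proj_linear[OF sDp])
  have QX: "Q (X j t) = 0" for j
  proof -
    have "X j t \<in> D" unfolding D_def E_def ruling_distr_def by (intro span_base) blast
    then have "X j t \<in> orthogonal_comp (orthogonal_comp D)" using orthogonal_comp_subset by blast
    then show ?thesis unfolding Q_def by (rule orth_proj_perp[OF sDp])
  qed
  have QMv: "Q Mv = (\<Sum>j\<in>UNIV. (v \<bullet> X j t) *\<^sub>R Q (vderiv 1 (X j) t))"
    unfolding Mv_def by (simp add: linear_sum[OF linQ] linear_scale[OF linQ])
  obtain r where r: "r > 0" "ball t r \<subseteq> I" using I t open_contains_ball by blast
  have Xvd: "(X j has_vector_derivative vderiv 1 (X j) t) (at t)" for j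
    using smooth_vd[OF X_smooth[rule_format, of j] t, of 0] by simp
  have key: "Q (vector_derivative V (at t)) = Q Mv" if V: "local_section E t V" "V t = v" for V
  proof -
    obtain e where e: "e > 0" "smooth_curve_on (ball t e) V" "\<forall>s\<in>ball t e. V s \<in> E s"
      using V(1) unfolding local_section_def by blast
    define S where "S = ball t (min e r)"
    have S: "open S" "t \<in> S" unfolding S_def using e r by auto
    define V' where "V' = vector_derivative V (at t)"
    have Vvd: "(V has_vector_derivative V') (at t)"
      using smooth_vd[OF e(2), of t 0] e(1) unfolding V'_def by simp
    define W where "W s = (\<Sum>j\<in>UNIV. (V s \<bullet> X j s) *\<^sub>R X j s)" for s
    have VW: "V s = W s" if "s \<in> S" for s
    proof -
      have sI: "s \<in> I" using that r unfolding S_def by auto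
      have "V s \<in> span (range (\<lambda>j. X j s))" using e(3) that unfolding S_def E_def ruling_distr_def by auto
      then show ?thesis unfolding W_def using ortho_expand[where X=X and s=s, OF bspec[OF orth sI]] by blast
    qed
    define Z where "Z = (\<Sum>j\<in>UNIV. (V t \<bullet> X j t) *\<^sub>R vderiv 1 (X j) t + (V t \<bullet> vderiv 1 (X j) t + V' \<bullet> X j t) *\<^sub>R X j t)"
    have Wvd: "(W has_vector_derivative Z) (at t)"
      unfolding W_def[abs_def] Z_def
      by (intro has_vector_derivative_sum bounded_bilinear.has_vector_derivative[OF bounded_bilinear_scaleR]
          bounded_bilinear.has_vector_derivative[OF bounded_bilinear_inner] Vvd Xvd)
    have Wvd2: "(W has_vector_derivative V') (at t)"
      by (rule has_vector_derivative_transform_within_open[OF Vvd S]) (use VW in simp)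
    have "Z = V'" using vector_derivative_unique_at[OF Wvd Wvd2] .
    then have "Q V' = Q Z" by simp
    also have "\<dots> = (\<Sum>j\<in>UNIV. (v \<bullet> X j t) *\<^sub>R Q (vderiv 1 (X j) t))"
      unfolding Z_def using V(2)
      by (simp add: linear_sum[OF linQ] linear_scale[OF linQ] linear_add[OF linQ] QX)
    finally show ?thesis unfolding V'_def QMv .
  qed
  define V0 where "V0 s = (\<Sum>j\<in>UNIV. (v \<bullet> X j t) *\<^sub>R X j s)" for s
  have V0: "local_section E t V0" "V0 t = v"
  proof -
    have "smooth_curve_on (ball t r) V0"
      unfolding V0_def[abs_def]
      by (rule smooth_lin_comb[OF open_ball smooth_subset[OF spec[OF X_smooth] r(2)]])
    moreover have "V0 s \<in> E s" for s
      unfolding V0_def E_def ruling_distr_def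
      by (intro span_sum span_mul span_base) blast
    ultimately show "local_section E t V0" unfolding local_section_def using r by blast
    show "V0 t = v" unfolding V0_def
      using ortho_expand[where X=X and s=t, OF bspec[OF orth t], of v] v unfolding ruling_distr_def by simp
  qed
  have "rho_map E t v = Q Mv"
    unfolding rho_map_def
  proof (rule the_equality)
    show "\<forall>V. local_section E t V \<and> V t = v \<longrightarrow> orth_proj (orthogonal_comp (E t)) (vector_derivative V (at t)) = Q Mv"
      using key unfolding Q_def D_def by blast
  next
    fix w assume "\<forall>V. local_section E t V \<and> V t = v \<longrightarrow> orth_proj (orthogonal_comp (E t)) (vector_derivative V (at t)) = w"
    then have "Q (vector_derivative V0 (at t)) = w" using V0 unfolding Q_def D_def by blast
    then show "w = Q Mv" using key[OF V0] by simp
  qed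
  then show ?thesis unfolding E_def Q_def D_def Mv_def .
qed


lemma degree_formula:
  fixes X :: "'k::finite \<Rightarrow> real \<Rightarrow> 'a::euclidean_space"
  assumes I: "open I" and t: "t \<in> I"
    and X_smooth: "\<forall>j. smooth_curve_on I (X j)"
    and orth: "\<forall>t\<in>I. \<forall>i j. X i t \<bullet> X j t = (if i = j then 1 else 0)"
  shows "degree_at (ruling_distr X) t =
    dim (orth_proj (orthogonal_comp (ruling_distr X t)) ` span (range (\<lambda>j. vderiv 1 (X j) t)))"
proof -
  define M where "M v = (\<Sum>j\<in>UNIV. (v \<bullet> X j t) *\<^sub>R vderiv 1 (X j) t)" for v
  have linM: "linear M"
    by (rule linearI) (simp_all add: M_def inner_add_left scaleR_add_left sum.distrib scaleR_sum_right)
  have MX: "M (X i t) = vderiv 1 (X i) t" for i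
  proof -
    have "M (X i t) = (\<Sum>j\<in>UNIV. (if i = j then vderiv 1 (X j) t else 0))"
      unfolding M_def using bspec[OF orth t] by (intro sum.cong) auto
    also have "\<dots> = vderiv 1 (X i) t" by simp
    finally show ?thesis .
  qed
  have MD: "M ` ruling_distr X t = span (range (\<lambda>j. vderiv 1 (X j) t))"
  proof -
    have "M ` ruling_distr X t = span (M ` range (\<lambda>j. X j t))"
      unfolding ruling_distr_def by (rule linear_span_image[OF linM, symmetric])
    also have "M ` range (\<lambda>j. X j t) = range (\<lambda>j. vderiv 1 (X j) t)"
      using MX by (auto simp: image_iff)
    finally show ?thesis .
  qed
  have "rho_map (ruling_distr X) t ` ruling_distr X t =
        orth_proj (orthogonal_comp (ruling_distr X t)) ` (M ` ruling_distr X t)"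
    using rho_value[OF I t X_smooth orth] unfolding M_def by (auto simp: image_iff)
  then show ?thesis unfolding degree_at_def MD by simp
qed


theorem mainTheorem3:
  fixes I :: "real set"
    and \<gamma> :: "real \<Rightarrow> 'a::euclidean_space"
    and X :: "'k::finite \<Rightarrow> real \<Rightarrow> 'a"
    and d :: nat
  assumes I: "open I" "is_interval I" "I \<noteq> {}"
    and \<gamma>_smooth: "smooth_curve_on I \<gamma>"
    and unit_speed: "\<forall>t\<in>I. norm (vector_derivative \<gamma> (at t)) = 1"
    and X_smooth: "\<forall>j. smooth_curve_on I (X j)"
    and X_orthonormal: "\<forall>t\<in>I. \<forall>i j. X i t \<bullet> X j t = (if i = j then 1 else 0)"
    and degree: "\<forall>t\<in>I. degree_at (ruling_distr X) t = d"
  shows "\<forall>t\<in>I. \<forall>u. regular_point (ruled_map \<gamma> X) (t, u) \<longrightarrow>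
           int d - 1 \<le> int (dim (first_normal_space (ruled_map \<gamma> X) (t, u))) \<and>
           dim (first_normal_space (ruled_map \<gamma> X) (t, u)) \<le> d + 1"
proof (intro ballI allI impI)
  fix t u
  assume t: "t \<in> I" and "regular_point (ruled_map \<gamma> X) (t, u)"
  define x where "x = (t, u)"
  define \<sigma> where "\<sigma> = ruled_map \<gamma> X"
  define Lf where "Lf y h = fst h *\<^sub>R vderiv 1 \<gamma> (fst y) + (\<Sum>j\<in>UNIV. (snd y $ j) *\<^sub>R (fst h *\<^sub>R vderiv 1 (X j) (fst y)) + (snd h $ j) *\<^sub>R X j (fst y))"
    for y :: "real \<times> (real ^ 'k)" and h :: "real \<times> (real ^ 'k)"
  have Xs: "smooth_curve_on I (X j)" for j using X_smooth by blast
  have dsig: "(\<sigma> has_derivative Lf y) (at y)" if "fst y \<in> I" for y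
  proof -
    have "(\<sigma> has_derivative (\<lambda>h. fst h *\<^sub>R vderiv 1 \<gamma> (fst y) +
     (\<Sum>j\<in>UNIV. (snd y $ j) *\<^sub>R (fst h *\<^sub>R vderiv 1 (X j) (fst y)) + (snd h $ j) *\<^sub>R X j (fst y)))) (at y)"
      unfolding \<sigma>_def
      by (rule sigma_has_deriv) (use smooth_vd[OF \<gamma>_smooth that, of 0] smooth_vd[OF Xs that, of 0] in simp_all)
    then show ?thesis unfolding Lf_def[abs_def] .
  qed
  have fd: "frechet_derivative \<sigma> (at y) = Lf y" if "fst y \<in> I" for y
    using frechet_derivative_at[OF dsig[OF that]] by simp
  define gg where "gg = vderiv 2 \<gamma> t"
  define Xd where "Xd j = vderiv 1 (X j) t" for j
  define Xdd where "Xdd j = vderiv 2 (X j) t" for j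
  define SD where "SD h k = fst h *\<^sub>R (fst k *\<^sub>R gg) + (\<Sum>j\<in>UNIV. ((u $ j) *\<^sub>R (fst h *\<^sub>R (fst k *\<^sub>R Xdd j)) + (snd k $ j) *\<^sub>R (fst h *\<^sub>R Xd j)) + (snd h $ j) *\<^sub>R (fst k *\<^sub>R Xd j))"
    for h k :: "real \<times> (real ^ 'k)"
  have xI: "fst x \<in> I" unfolding x_def using t by simp
  have sd: "second_deriv \<sigma> x h k = SD h k" for h k
  proof -
    have a1: "(vderiv 1 \<gamma> has_vector_derivative vderiv 2 \<gamma> t) (at (fst x))"
      using smooth_vd[OF \<gamma>_smooth t, of 1] by (simp add: x_def numeral_2_eq_2)
    have a2: "(vderiv 1 (X j) has_vector_derivative vderiv 2 (X j) t) (at (fst x))" for j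
      using smooth_vd[OF Xs t, of 1] by (simp add: x_def numeral_2_eq_2)
    have a3: "(X j has_vector_derivative vderiv 1 (X j) t) (at (fst x))" for j
      using smooth_vd[OF Xs t, of 0] by (simp add: x_def)
    have d1: "((\<lambda>y. Lf y h) has_derivative (\<lambda>k. SD h k)) (at x)"
      unfolding Lf_def[abs_def] SD_def gg_def Xd_def Xdd_def
      using F_has_deriv[OF a1 a2 a3, of h] by (simp add: x_def)
    have "open (I \<times> (UNIV :: (real ^ 'k) set))" using I(1) by (simp add: open_Times)
    moreover have "x \<in> I \<times> UNIV" using xI by (cases x) auto
    ultimately have "((\<lambda>y. frechet_derivative \<sigma> (at y) h) has_derivative (\<lambda>k. SD h k)) (at x)"
      by (rule has_derivative_transform_within_open[OF d1]) (auto simp: fd)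
    then show ?thesis unfolding second_deriv_def using frechet_derivative_at by metis
  qed
  show "int d - 1 \<le> int (dim (first_normal_space (ruled_map \<gamma> X) (t, u))) \<and>
           dim (first_normal_space (ruled_map \<gamma> X) (t, u)) \<le> d + 1"
  proof -
    define A where "A = vderiv 1 \<gamma> t + (\<Sum>j\<in>UNIV. (u $ j) *\<^sub>R Xd j)"
    define B where "B = gg + (\<Sum>j\<in>UNIV. (u $ j) *\<^sub>R Xdd j)"
    define D where "D = ruling_distr X t"
    define Tg where "Tg = range (Lf x)"
    define SS where "SS = span (range Xd)"
    define N1 where "N1 = first_normal_space \<sigma> x"
    define P where "P = orth_proj (orthogonal_comp Tg)"
    have sD: "subspace D" unfolding D_def ruling_distr_def by (rule subspace_span)
    have linL: "linear (Lf x)" using has_derivative_linear[OF dsig[OF xI]] .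
    have sTg: "subspace Tg" unfolding Tg_def using linear_subspace_image[OF linL subspace_UNIV] .
    have Lfx: "Lf x h = fst h *\<^sub>R A + (\<Sum>j\<in>UNIV. (snd h $ j) *\<^sub>R X j t)" for h
      unfolding Lf_def A_def Xd_def x_def
      by (simp add: sum.distrib scaleR_add_right scaleR_sum_right mult.commute)
    have LX: "Lf x (0, axis j 1) = X j t" for j
    proof -
      have "Lf x (0, axis j 1) = (\<Sum>i\<in>UNIV. (axis j 1 $ i) *\<^sub>R X i t)" by (simp add: Lfx)
      also have "\<dots> = (\<Sum>i\<in>UNIV. (if j = i then X i t else 0))"
        by (intro sum.cong) (auto simp: axis_def)
      also have "\<dots> = X j t" by simp
      finally show ?thesis .
    qed
    have DT: "D \<subseteq> Tg"
      unfolding D_def ruling_distr_def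
    proof (rule span_minimal[OF _ sTg])
      show "range (\<lambda>j. X j t) \<subseteq> Tg" unfolding Tg_def using LX by (auto simp: image_iff) (metis)
    qed
    have TA: "Tg \<subseteq> span (insert A D)"
    proof
      fix y assume "y \<in> Tg"
      then obtain h where y: "y = Lf x h" unfolding Tg_def by blast
      have "(\<Sum>j\<in>UNIV. (snd h $ j) *\<^sub>R X j t) \<in> D"
        unfolding D_def ruling_distr_def by (intro span_sum span_mul span_base) blast
      then have "(\<Sum>j\<in>UNIV. (snd h $ j) *\<^sub>R X j t) \<in> span (insert A D)"
        using span_superset by blast
      moreover have "fst h *\<^sub>R A \<in> span (insert A D)" by (intro span_mul span_base) blast
      ultimately show "y \<in> span (insert A D)" unfolding y Lfx by (simp add: span_add)
    qed
    have sSS: "subspace SS" unfolding SS_def by (rule subspace_span)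
    have sN1: "subspace N1" unfolding N1_def first_normal_space_def by (rule subspace_span)
    have NS: "normal_space \<sigma> x = orthogonal_comp Tg"
      unfolding normal_space_def Tg_def fd[OF xI] ..
    have sff: "second_fund_form \<sigma> x h k = P (SD h k)" for h k
      unfolding second_fund_form_def NS P_def sd ..
    have linP: "linear P" unfolding P_def by (rule orth_proj_linear[OF subspace_orthogonal_comp])
    have SDX: "SD (1, 0) (0, axis j 1) = Xd j" for j
    proof -
      have "SD (1, 0) (0, axis j 1) = (\<Sum>i\<in>UNIV. (axis j 1 $ i) *\<^sub>R Xd i)" by (simp add: SD_def)
      also have "\<dots> = (\<Sum>i\<in>UNIV. (if j = i then Xd i else 0))"
        by (intro sum.cong) (auto simp: axis_def)
      also have "\<dots> = Xd j" by simp
      finally show ?thesis .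
    qed
    have N1a: "P ` SS \<subseteq> N1"
    proof -
      have "P ` SS = span (P ` range Xd)" unfolding SS_def by (rule linear_span_image[OF linP, symmetric])
      also have "\<dots> \<subseteq> N1"
      proof (rule span_minimal[OF _ sN1])
        show "P ` range Xd \<subseteq> N1"
        proof
          fix z assume "z \<in> P ` range Xd"
          then obtain j where z: "z = P (Xd j)" by blast
          have "z = second_fund_form \<sigma> x (1, 0) (0, axis j 1)" using z sff SDX by simp
          then show "z \<in> N1" unfolding N1_def first_normal_space_def by (intro span_base) blast
        qed
      qed
      finally show ?thesis .
    qed
    have SDeq: "SD h k = (fst h * fst k) *\<^sub>R B + (\<Sum>j\<in>UNIV. (snd k $ j * fst h + snd h $ j * fst k) *\<^sub>R Xd j)" for h k
      unfolding SD_def B_def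
      by (simp add: sum.distrib scaleR_add_left scaleR_add_right scaleR_sum_right algebra_simps)
    have N1b: "N1 \<subseteq> span (insert (P B) (P ` SS))"
      unfolding N1_def first_normal_space_def
    proof (rule span_minimal[OF _ subspace_span])
      show "{second_fund_form \<sigma> x h k |h k. True} \<subseteq> span (insert (P B) (P ` SS))"
      proof
        fix z assume "z \<in> {second_fund_form \<sigma> x h k |h k. True}"
        then obtain h k where z: "z = P (SD h k)" using sff by blast
        have "SD h k \<in> span (insert B (range Xd))"
          unfolding SDeq by (intro span_add span_mul span_sum span_base) auto
        then have "z \<in> P ` span (insert B (range Xd))" using z by blast
        also have "\<dots> = span (P ` insert B (range Xd))" by (rule linear_span_image[OF linP, symmetric])
        also have "\<dots> \<subseteq> span (insert (P B) (P ` SS))"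
        proof (rule span_mono)
          have "range Xd \<subseteq> SS" unfolding SS_def by (rule span_superset)
          then show "P ` insert B (range Xd) \<subseteq> insert (P B) (P ` SS)" by blast
        qed
        finally show "z \<in> span (insert (P B) (P ` SS))" .
      qed
    qed
    have deg: "d = dim (orth_proj (orthogonal_comp D) ` SS)"
      using degree t degree_formula[OF I(1) t X_smooth X_orthonormal]
      unfolding D_def SS_def Xd_def by simp
    have "int (dim (orth_proj (orthogonal_comp D) ` SS)) - 1 \<le> int (dim N1) \<and>
         dim N1 \<le> dim (orth_proj (orthogonal_comp D) ` SS) + 1"
      by (rule dim_bounds_core[OF sD sTg DT TA sSS sN1 N1a[unfolded P_def] N1b[unfolded P_def]])
    then show ?thesis unfolding deg N1_def \<sigma>_def x_def .
  qed
qed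

end
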